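(* Let $A,B\subset\mathbb R^p$ be two disjoint compact sets of Lebesgue measure $0$, and let $C\in\mathbb R$. Then the set $D=\{\mathbf x\in\mathbb R^p: d(\mathbf x,A)^2-d(\mathbf x,B)^2=C\}$ has Lebesgue measure $0$.
   Context: For $\mathbf x\in\mathbb R^p$ and $A\subset\mathbb R^p$, $d(\mathbf x,A)=\inf_{\mathbf y\in A}\|\mathbf x-\mathbf y\|$ (Euclidean distance). *)

theory Defs
  imports "HOL-Analysis.Analysis"
begin

end

theory Submission
  imports Defs
begin


lemma dist_sq_ident:
  fixes x y a b :: "'a::real_inner"
  shows "(dist y a)^2 - (dist x a)^2 - (dist y b)^2 + (dist x b)^2 = 2 * ((y - x) \<bullet> (b - a))"
  by (simp add: dist_norm power2_norm_eq_inner inner_diff_left inner_diff_right inner_commute algebra_simps)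

lemma g_ident:
  fixes x a b :: "'a::real_inner"
  shows "2 * ((b - x) \<bullet> (b - a)) = (norm (b - x))^2 - (norm (a - x))^2 + (norm (b - a))^2"
  by (simp add: power2_norm_eq_inner inner_diff_left inner_diff_right inner_commute algebra_simps)

lemma core:
  fixes A B :: "'a::euclidean_space set"
  assumes cA: "compact A" and cB: "compact B" and nA: "A \<noteq> {}" and nB: "B \<noteq> {}"
    and dj: "A \<inter> B = {}" and xB: "x \<notin> B" and le: "infdist x A \<le> infdist x B"
  shows "\<exists>\<rho>>0. \<rho> \<le> 1 \<and> (\<exists>\<delta>>0. \<exists>u. norm u = 1 \<and> (\<forall>t. 0 < t \<and> t < \<delta> \<longrightarrow>
     (\<forall>y\<in>ball (x + t *\<^sub>R u) (\<rho> * t).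
        (infdist y A)^2 - (infdist y B)^2 > (infdist x A)^2 - (infdist x B)^2)))"
proof -
  define r where "r = infdist x A"
  define s where "s = infdist x B"
  have s0: "s > 0" unfolding s_def
    using infdist_pos_not_in_closed[OF compact_imp_closed[OF cB] nB xB] .
  obtain b0 where b0: "b0 \<in> B" "s = dist x b0"
    using infdist_attains_inf[OF compact_imp_closed[OF cB] nB, of x] unfolding s_def by blast
  have nb0: "norm (b0 - x) = s" using b0 by (simp add: dist_norm norm_minus_commute)
  define g where "g a = (b0 - x) \<bullet> (b0 - a)" for a
  define \<phi> where "\<phi> a = max (g a) (norm (x - a) - r)" for a
  have cont: "continuous_on A \<phi>" unfolding \<phi>_def g_def by (intro continuous_intros)
  obtain am where am: "am \<in> A" "\<And>a. a \<in> A \<Longrightarrow> \<phi> am \<le> \<phi> a"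
    using continuous_attains_inf[OF cA nA cont] by blast
  define m where "m = \<phi> am"
  have m0: "m > 0"
  proof (cases "norm (x - am) - r > 0")
    case True then show ?thesis unfolding m_def \<phi>_def by auto
  next
    case False
    then have "norm (am - x) \<le> s" using le unfolding r_def s_def by (simp add: norm_minus_commute)
    then have "(norm (am - x))^2 \<le> s^2" by (simp add: power_mono)
    moreover have "am \<noteq> b0" using am(1) b0(1) dj by blast
    then have "(norm (b0 - am))^2 > 0" by simp
    moreover have "(norm (b0 - x))^2 = s^2" using nb0 by simp
    ultimately have "g am > 0" using g_ident[of b0 x am] unfolding g_def by linarith
    then show ?thesis unfolding m_def \<phi>_def by auto
  qed
  obtain M0 where M0: "\<And>a. a \<in> A \<Longrightarrow> norm a \<le> M0"
    using compact_imp_bounded[OF cA] by (auto simp: bounded_iff)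
  define M where "M = norm b0 + \<bar>M0\<bar> + 1"
  have M0': "M > 0" unfolding M_def by (smt (verit) norm_ge_zero)
  have Mb: "norm (b0 - a) \<le> M" if "a \<in> A" for a
    using M0[OF that] norm_triangle_ineq4[of b0 a] unfolding M_def by linarith
  define u where "u = (1/s) *\<^sub>R (b0 - x)"
  have nu: "norm u = 1" unfolding u_def using nb0 s0 by simp
  define \<rho> where "\<rho> = min 1 (m / (2 * s * M))"
  have rho0: "\<rho> > 0" unfolding \<rho>_def using m0 s0 M0' by simp
  have rhoM: "\<rho> * M \<le> m / (2 * s)"
  proof -
    have "\<rho> \<le> m / (2 * s * M)" unfolding \<rho>_def by simp
    then have "\<rho> * M \<le> m / (2 * s * M) * M" using M0' by (intro mult_right_mono) auto
    also have "\<dots> = m / (2 * s)" using M0' by simp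
    finally show ?thesis .
  qed
  define \<delta> where "\<delta> = m / 4"
  have r1: "\<rho> \<le> 1" unfolding \<rho>_def by simp
  have d0: "\<delta> > 0" unfolding \<delta>_def using m0 by simp
  have main: "(infdist y A)^2 - (infdist y B)^2 > (infdist x A)^2 - (infdist x B)^2"
    if t: "0 < t \<and> t < \<delta>" and y: "y \<in> ball (x + t *\<^sub>R u) (\<rho> * t)" for t y
  proof -
    define z where "z = y - x - t *\<^sub>R u"
    have nz: "norm z < \<rho> * t" using y unfolding z_def by (simp add: dist_norm norm_minus_commute algebra_simps)
    have "\<rho> * t \<le> 1 * t" by (rule mult_right_mono) (use r1 t in auto)
    then have nz1: "norm z < t" using nz by linarith
    have yx: "norm (y - x) < 2 * t"
    proof -
      have "y - x = t *\<^sub>R u + z" unfolding z_def by simp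
      then have "norm (y - x) \<le> norm (t *\<^sub>R u) + norm z" by (metis norm_triangle_ineq)
      then show ?thesis using nu nz1 t by simp
    qed
    obtain a' where a': "a' \<in> A" "infdist y A = dist y a'"
      using infdist_attains_inf[OF compact_imp_closed[OF cA] nA, of y] by blast
    have "infdist y A \<le> infdist x A + dist y x" by (rule infdist_triangle)
    then have "dist x a' \<le> r + 2 * norm (y - x)"
      using a' dist_triangle[of x a' y] unfolding r_def by (simp add: dist_norm norm_minus_commute)
    then have "norm (x - a') - r < m" using yx t unfolding \<delta>_def by (simp add: dist_norm)
    then have ga: "g a' \<ge> m" using am(2)[OF a'(1)] unfolding m_def \<phi>_def by linarith
    have key: "(y - x) \<bullet> (b0 - a') > 0"
    proof -
      have "(y - x) \<bullet> (b0 - a') = t * (u \<bullet> (b0 - a')) + z \<bullet> (b0 - a')"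
        unfolding z_def by (simp add: inner_diff_left inner_add_left algebra_simps)
      also have "u \<bullet> (b0 - a') = g a' / s" unfolding u_def g_def by simp
      finally have eq: "(y - x) \<bullet> (b0 - a') = t * (g a' / s) + z \<bullet> (b0 - a')" .
      have "\<bar>z \<bullet> (b0 - a')\<bar> \<le> norm z * norm (b0 - a')" by (rule Cauchy_Schwarz_ineq2)
      also have "\<dots> \<le> (\<rho> * t) * M" using nz Mb[OF a'(1)]
        by (intro mult_mono) (use rho0 t in auto)
      also have "\<dots> = t * (\<rho> * M)" by simp
      also have "\<dots> \<le> t * (m / (2 * s))" using rhoM t by (intro mult_left_mono) auto
      finally have zb: "z \<bullet> (b0 - a') \<ge> - (t * (m / (2 * s)))" by linarith
      have "t * (g a' / s) \<ge> t * (m / s)" using ga t s0 by (intro mult_left_mono divide_right_mono) auto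
      moreover have "t * (m / s) - t * (m / (2 * s)) > 0" using t m0 s0 by (simp add: field_simps)
      ultimately show ?thesis using eq zb by linarith
    qed
    have i1: "(infdist x A)^2 \<le> (dist x a')^2"
      by (rule power_mono[OF infdist_le[OF a'(1)] infdist_nonneg])
    have i2: "(infdist y B)^2 \<le> (dist y b0)^2"
      by (rule power_mono[OF infdist_le[OF b0(1)] infdist_nonneg])
    have e1: "(infdist y A)^2 = (dist y a')^2" using a' by simp
    have e2: "(infdist x B)^2 = (dist x b0)^2" using b0 s_def by simp
    show "(infdist y A)^2 - (infdist y B)^2 > (infdist x A)^2 - (infdist x B)^2"
      using dist_sq_ident[of y a' x b0] key i1 i2 e1 e2 by linarith
  qed
  show ?thesis apply (rule exI[of _ \<rho>]) apply (intro conjI rho0 r1) apply (rule exI[of _ \<delta>]) apply (intro conjI d0) apply (rule exI[of _ u]) using nu main by blast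
qed



lemma porous_negligible_ball:
  fixes S P :: "'a::euclidean_space set"
  assumes S: "S \<in> sets lebesgue" and c: "0 < c" and PS: "P \<subseteq> S"
    and por: "\<And>x r. x \<in> P \<Longrightarrow> r > 0 \<Longrightarrow> \<exists>d. 0 < d \<and> d \<le> r \<and>
               measure lebesgue (S \<inter> ball x d) \<le> (1 - c) * measure lebesgue (ball x d)"
  shows "negligible (P \<inter> ball z R)"
proof (clarsimp simp: negligible_outer_le)
  fix e :: real assume e: "e > 0"
  define T where "T = S \<inter> ball z R"
  have Tm: "T \<in> sets lebesgue" unfolding T_def using S by auto
  obtain U where U: "open U" "T \<subseteq> U" "(U - T) \<in> lmeasurable" "emeasure lebesgue (U - T) < ennreal (c * e)"
    using sets_lebesgue_outer_open[OF Tm, of "c * e"] c e by auto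
  define V where "V = U - T"
  have Vm: "V \<in> lmeasurable" using U V_def by simp
  have eV: "emeasure lebesgue V = ennreal (measure lebesgue V)" using Vm by (simp add: emeasure_eq_measure2)
  have "ennreal (measure lebesgue V) < ennreal (c * e)" using U(4) eV unfolding V_def by simp
  then have mV: "measure lebesgue V \<le> c * e" by (subst (asm) ennreal_less_iff) auto
  define W where "W = U \<inter> ball z R"
  have oW: "open W" unfolding W_def using U by auto
  define K where "K = {(x,d). x \<in> P \<inter> ball z R \<and> 0 < d \<and> ball x d \<subseteq> W \<and>
       measure lebesgue (S \<inter> ball x d) \<le> (1 - c) * measure lebesgue (ball x d)}"
  obtain C where C: "countable C" "C \<subseteq> K"
    and pwC: "pairwise (\<lambda>i j. disjnt (ball (fst i) (snd i)) (ball (fst j) (snd j))) C"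
    and negC: "negligible((P \<inter> ball z R) - (\<Union>i \<in> C. ball (fst i) (snd i)))"
  proof (rule Vitali_covering_theorem_balls [of "P \<inter> ball z R" K fst snd])
    fix x and d :: real
    assume x: "x \<in> P \<inter> ball z R" and d: "d > 0"
    have "x \<in> W" using x PS U(2) unfolding W_def T_def by auto
    then obtain k where k: "k > 0" "ball x k \<subseteq> W" using oW open_contains_ball by blast
    obtain d' where d': "0 < d'" "d' \<le> min (d/2) k"
      "measure lebesgue (S \<inter> ball x d') \<le> (1 - c) * measure lebesgue (ball x d')"
      using por[of x "min (d/2) k"] x d k by auto
    have "ball x d' \<subseteq> ball x k" using d' by (simp add: ball_subset_ball_iff)
    then have "ball x d' \<subseteq> W" using k by blast
    then show "\<exists>i. i \<in> K \<and> x \<in> ball (fst i) (snd i) \<and> snd i < d"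
    proof (intro exI[of _ "(x, d')"] conjI)
      show "(x, d') \<in> K" unfolding K_def using d' x \<open>ball x d' \<subseteq> W\<close> by simp
      show "x \<in> ball (fst (x, d')) (snd (x, d'))" using d' by simp
      show "snd (x, d') < d" using d' d by simp
    qed
  qed
  define B where "B i = ball (fst i) (snd i)" for i :: "'a \<times> real"
  have Bm: "B i \<in> lmeasurable" for i unfolding B_def by simp
  have hole: "c * measure lebesgue (B i) \<le> measure lebesgue (B i \<inter> V)" if "i \<in> C" for i
  proof -
    have iK: "i \<in> K" using that C by auto
    have sub: "B i \<subseteq> W" and hs: "measure lebesgue (S \<inter> B i) \<le> (1 - c) * measure lebesgue (B i)"
      using iK unfolding K_def B_def by auto
    have bsub: "B i \<subseteq> (S \<inter> B i) \<union> (B i \<inter> V)"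
      using sub unfolding W_def V_def T_def by auto
    have m1: "S \<inter> B i \<in> lmeasurable" using fmeasurable_Int_fmeasurable[OF Bm[of i] S] by (simp add: Int_commute)
    have m2: "B i \<inter> V \<in> lmeasurable" using fmeasurable_Int_fmeasurable[OF Bm[of i] fmeasurableD[OF Vm]] .
    have m12: "(S \<inter> B i) \<union> (B i \<inter> V) \<in> lmeasurable" using m1 m2 by (rule fmeasurable.Un)
    have "measure lebesgue (B i) \<le> measure lebesgue ((S \<inter> B i) \<union> (B i \<inter> V))"
      by (rule measure_mono_fmeasurable[OF bsub fmeasurableD[OF Bm] m12])
    also have "\<dots> \<le> measure lebesgue (S \<inter> B i) + measure lebesgue (B i \<inter> V)"
      using m1 m2 by (intro measure_Un_le) (auto dest: fmeasurableD)
    finally show ?thesis using hs by (simp add: algebra_simps)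
  qed
  have bound: "measure lebesgue (\<Union>i\<in>I. B i) \<le> e" if I: "I \<subseteq> C" "finite I" for I
  proof -
    have pwI: "pairwise (\<lambda>i j. disjnt (B i) (B j)) I"
      using pwC I unfolding B_def by (auto elim: pairwise_mono)
    have pwI2: "pairwise (\<lambda>i j. disjnt (B i \<inter> V) (B j \<inter> V)) I"
      using pwI unfolding pairwise_def disjnt_def by blast
    have "c * measure lebesgue (\<Union>i\<in>I. B i) = (\<Sum>i\<in>I. c * measure lebesgue (B i))"
      using I pwI Bm by (simp add: measure_UNION' sum_distrib_left)
    also have "\<dots> \<le> (\<Sum>i\<in>I. measure lebesgue (B i \<inter> V))"
      using I hole by (intro sum_mono) auto
    also have "\<dots> = measure lebesgue (\<Union>i\<in>I. B i \<inter> V)"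
      using I pwI2 Bm Vm by (intro measure_UNION'[symmetric]) auto
    also have "\<dots> \<le> measure lebesgue V"
      using I Vm Bm by (intro measure_mono_fmeasurable) auto
    also have "\<dots> \<le> c * e" by (rule mV)
    finally show ?thesis using c by simp
  qed
  have UCm: "(\<Union>i\<in>C. B i) \<in> lmeasurable" and UCle: "measure lebesgue (\<Union>i\<in>C. B i) \<le> e"
    using fmeasurable_UN_bound[OF C(1) _ bound] measure_UN_bound[OF C(1) _ bound] Bm by auto
  define N where "N = (P \<inter> ball z R) - (\<Union>i \<in> C. B i)"
  have negN: "negligible N" using negC unfolding N_def B_def by simp
  show "\<exists>T. P \<inter> ball z R \<subseteq> T \<and> T \<in> lmeasurable \<and> measure lebesgue T \<le> e"
  proof (intro exI conjI)
    show "P \<inter> ball z R \<subseteq> N \<union> (\<Union>i\<in>C. B i)" unfolding N_def by auto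
    show "N \<union> (\<Union>i\<in>C. B i) \<in> lmeasurable" using negN UCm
      by (simp add: fmeasurable.Un negligible_imp_measurable)
    have "measure lebesgue (N \<union> (\<Union>i\<in>C. B i)) \<le> measure lebesgue N + measure lebesgue (\<Union>i\<in>C. B i)"
      using negN UCm by (intro measure_Un_le) (auto simp: negligible_imp_sets)
    then show "measure lebesgue (N \<union> (\<Union>i\<in>C. B i)) \<le> e"
      using negN UCle by (simp add: negligible_imp_measure0)
  qed
qed



lemma hole_porous:
  fixes D :: "'a::euclidean_space set"
  assumes Dm: "D \<in> sets lebesgue" and rho: "0 < \<rho>" "\<rho> \<le> 1" and dl: "0 < \<delta>" and nu: "norm u = 1"
    and hole: "\<And>t y. 0 < t \<Longrightarrow> t < \<delta> \<Longrightarrow> y \<in> ball (x + t *\<^sub>R u) (\<rho> * t) \<Longrightarrow> y \<notin> D"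
    and r: "r > 0"
  shows "\<exists>d. 0 < d \<and> d \<le> r \<and>
     measure lebesgue (D \<inter> ball x d) \<le> (1 - (\<rho>/2)^DIM('a)) * measure lebesgue (ball x d)"
proof -
  define d where "d = min r \<delta>"
  have d0: "0 < d" "d \<le> r" "d \<le> \<delta>" using r dl unfolding d_def by auto
  define H where "H = ball (x + (d/2) *\<^sub>R u) (\<rho> * (d/2))"
  have Hsub: "H \<subseteq> ball x d"
  proof
    fix y assume "y \<in> H"
    then have "dist (x + (d/2) *\<^sub>R u) y < \<rho> * (d/2)" unfolding H_def by simp
    moreover have "dist x (x + (d/2) *\<^sub>R u) = d/2" using nu d0 by (simp add: dist_norm)
    moreover have "\<rho> * (d/2) \<le> 1 * (d/2)" using rho d0 by (intro mult_right_mono) auto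
    ultimately have "dist x y < d" using dist_triangle[of x y "x + (d/2) *\<^sub>R u"] by linarith
    then show "y \<in> ball x d" by simp
  qed
  have HD: "D \<inter> ball x d \<subseteq> ball x d - H"
    using hole[of "d/2"] d0 unfolding H_def by auto
  have m1: "D \<inter> ball x d \<in> lmeasurable"
    using fmeasurable_Int_fmeasurable[OF lmeasurable_ball Dm] by (simp add: Int_commute)
  have "measure lebesgue (D \<inter> ball x d) \<le> measure lebesgue (ball x d - H)"
    using HD m1 by (intro measure_mono_fmeasurable) (auto simp: H_def intro!: fmeasurable_Diff)
  also have "\<dots> = measure lebesgue (ball x d) - measure lebesgue H"
    using Hsub emeasure_lborel_ball_finite[of x d] unfolding H_def by (intro measure_Diff) auto
  also have "measure lebesgue H = (\<rho> * (d/2))^DIM('a) * Henstock_Kurzweil_Integration.content (ball (0::'a) 1)"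
    unfolding H_def using rho d0 content_ball_conv_unit_ball[of "\<rho> * (d/2)" "x + (d/2) *\<^sub>R u"] by simp
  also have "measure lebesgue (ball x d) = d^DIM('a) * Henstock_Kurzweil_Integration.content (ball (0::'a) 1)"
    using d0 content_ball_conv_unit_ball[of d x] by simp
  also have "d ^ DIM('a) * Henstock_Kurzweil_Integration.content (ball (0::'a) 1) - (\<rho> * (d / 2)) ^ DIM('a) * Henstock_Kurzweil_Integration.content (ball (0::'a) 1)
     = (1 - (\<rho>/2)^DIM('a)) * (d^DIM('a) * Henstock_Kurzweil_Integration.content (ball (0::'a) 1))"
  proof -
    have e0: "\<rho> * (d / 2) = (\<rho>/2) * d" by simp
    have e: "(\<rho> * (d / 2)) ^ DIM('a) = (\<rho>/2)^DIM('a) * d^DIM('a)" by (simp only: e0 power_mult_distrib)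
    show ?thesis unfolding e by (simp add: algebra_simps)
  qed
  finally have "measure lebesgue (D \<inter> ball x d) \<le> (1 - (\<rho>/2)^DIM('a)) * (d^DIM('a) * Henstock_Kurzweil_Integration.content (ball (0::'a) 1))" .
  moreover have "measure lebesgue (ball x d) = d^DIM('a) * Henstock_Kurzweil_Integration.content (ball (0::'a) 1)"
    using d0 content_ball_conv_unit_ball[of d x] by simp
  ultimately show ?thesis using d0 by auto
qed

lemma hole_of_core:
  fixes A B :: "'a::euclidean_space set"
  assumes cA: "compact A" and cB: "compact B" and nA: "A \<noteq> {}" and nB: "B \<noteq> {}"
    and dj: "A \<inter> B = {}" and xA: "x \<notin> A" and xB: "x \<notin> B"
    and xD: "(infdist x A)^2 - (infdist x B)^2 = C"
  shows "\<exists>\<rho>>0. \<rho> \<le> 1 \<and> (\<exists>\<delta>>0. \<exists>u. norm u = 1 \<and> (\<forall>t. 0 < t \<and> t < \<delta> \<longrightarrow>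
     (\<forall>y\<in>ball (x + t *\<^sub>R u) (\<rho> * t). (infdist y A)^2 - (infdist y B)^2 \<noteq> C)))"
proof (cases "infdist x A \<le> infdist x B")
  case True
  from core[OF cA cB nA nB dj xB True] show ?thesis using xD
    by (smt (verit, ccfv_threshold))
next
  case False
  have dj': "B \<inter> A = {}" using dj by blast
  from core[OF cB cA nB nA dj' xA] False show ?thesis using xD
    by (smt (verit, ccfv_threshold))
qed

lemma main_gen:
  fixes A B :: "'a::euclidean_space set"
  assumes cA: "compact A" and cB: "compact B" and nA: "A \<noteq> {}" and nB: "B \<noteq> {}"
    and dj: "A \<inter> B = {}" and negA: "negligible A" and negB: "negligible B"
  shows "negligible {x. (infdist x A)^2 - (infdist x B)^2 = C}"
proof -
  define D where "D = {x. (infdist x A)^2 - (infdist x B)^2 = C}"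
  have "closed D" unfolding D_def
    by (intro closed_Collect_eq continuous_intros) 
  then have Dm: "D \<in> sets lebesgue" by simp
  define P where "P k = {x \<in> D - (A \<union> B). \<forall>r>0. \<exists>d. 0 < d \<and> d \<le> r \<and>
     measure lebesgue (D \<inter> ball x d) \<le> (1 - inverse (real (Suc k))) * measure lebesgue (ball x d)}" for k
  have negP: "negligible (P k)" for k
  proof -
    have "negligible (P k \<inter> ball 0 (real m))" for m
      by (rule porous_negligible_ball[OF Dm, of "inverse (real (Suc k))"]) (auto simp: P_def)
    then have "negligible (\<Union>m. P k \<inter> ball 0 (real m))" by (rule negligible_Union_nat)
    moreover have "P k \<subseteq> (\<Union>m. P k \<inter> ball 0 (real m))"
    proof
      fix x assume "x \<in> P k"
      obtain m where "norm x < real m" using reals_Archimedean2 by blast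
      then show "x \<in> (\<Union>m. P k \<inter> ball 0 (real m))" using \<open>x \<in> P k\<close> by auto
    qed
    ultimately show ?thesis by (rule negligible_subset)
  qed
  have cover: "D \<subseteq> A \<union> B \<union> (\<Union>k. P k)"
  proof
    fix x assume xD: "x \<in> D"
    show "x \<in> A \<union> B \<union> (\<Union>k. P k)"
    proof (cases "x \<in> A \<union> B")
      case True then show ?thesis by blast
    next
      case False
      then obtain \<rho> \<delta> u where rho: "0 < \<rho>" "\<rho> \<le> 1" and dl: "0 < \<delta>" and nu: "norm u = 1"
        and h: "\<And>t y. 0 < t \<and> t < \<delta> \<Longrightarrow> y \<in> ball (x + t *\<^sub>R u) (\<rho> * t) \<Longrightarrow>
                (infdist y A)^2 - (infdist y B)^2 \<noteq> C"
        using hole_of_core[OF cA cB nA nB dj _ _ xD[unfolded D_def, simplified]] by blast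
      define c where "c = (\<rho>/2)^DIM('a)"
      have c0: "c > 0" unfolding c_def using rho by simp
      obtain k where k: "k > 0" "inverse (real k) < c" using ex_inverse_of_nat_less[OF c0] by blast
      have kk: "inverse (real (Suc k)) \<le> c"
        using k by (smt (verit) inverse_le_imp_le of_nat_Suc of_nat_0_less_iff lift_Suc_mono_le le_imp_inverse_le of_nat_le_iff)
      have "\<forall>r>0. \<exists>d. 0 < d \<and> d \<le> r \<and>
         measure lebesgue (D \<inter> ball x d) \<le> (1 - inverse (real (Suc k))) * measure lebesgue (ball x d)"
      proof (intro allI impI)
        fix r :: real assume r: "r > 0"
        obtain d where d: "0 < d" "d \<le> r"
          "measure lebesgue (D \<inter> ball x d) \<le> (1 - c) * measure lebesgue (ball x d)"
          using hole_porous[OF Dm rho dl nu _ r, of x] h unfolding D_def c_def by blast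
        have cm: "(1 - c) * measure lebesgue (ball x d) \<le> (1 - inverse (real (Suc k))) * measure lebesgue (ball x d)"
          using kk by (intro mult_right_mono) auto
        show "\<exists>d. 0 < d \<and> d \<le> r \<and>
         measure lebesgue (D \<inter> ball x d) \<le> (1 - inverse (real (Suc k))) * measure lebesgue (ball x d)"
          using d(1,2) order_trans[OF d(3) cm] by blast
      qed
      then have "x \<in> P k" unfolding P_def using xD False by blast
      then show ?thesis by blast
    qed
  qed
  have "negligible (A \<union> B \<union> (\<Union>k. P k))"
    using negA negB negligible_Union_nat[OF negP] by simp
  then show ?thesis using cover negligible_subset unfolding D_def by blast
qed


theorem mainTheorem17:
  fixes A B :: "(real ^ 'n) set" and C :: real
  assumes "compact A" and "compact B"
    and "A \<noteq> {}" and "B \<noteq> {}"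
    and "A \<inter> B = {}"
    and "A \<in> null_sets lebesgue" and "B \<in> null_sets lebesgue"
  shows "{x. (infdist x A)\<^sup>2 - (infdist x B)\<^sup>2 = C} \<in> null_sets lebesgue"
  using main_gen[OF assms(1-5), of C] assms(6,7) by (simp add: negligible_iff_null_sets)

end
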